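(* Let $G$ be a finite induced regular group and let $x\in G$ be such that $C_G(x)$ is a maximal centralizer in $G$. If there exists an element $y\in C_G(x)\setminus\beta_G(x)$ such that the order of $yZ(G)$ in $G/Z(G)$ is a prime $p\neq 2$, then $(\beta_G(x)\cup Z(G))/Z(G)$ is an elementary $p$-group.
   Context: For a finite group $G$, $C_G(x)$ denotes the centralizer of $x\in G$ and $Z(G)$ the center; $\beta_G(x)=\{y\in G\mid C_G(y)=C_G(x)\}$. The non-centralizer graph $\Upsilon_G$ is the simple graph with vertex set $G$ in which two distinct vertices $x,y$ are adjacent iff $C_G(x)\neq C_G(y)$; the induced non-centralizer graph $\Upsilon_{G\setminus Z(G)}$ is its induced subgraph on $G\setminus Z(G)$. $G$ is called induced regular if $\Upsilon_{G\setminus Z(G)}$ is a regular graph. A centralizer $C_G(x)$ is called maximal if it is not contained in any other proper centralizer of $G$. A group is called an elementary $p$-group if every non-identity element has order exactly $p$ (it need not be abelian). *)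

theory Defs
  imports "HOL-Algebra.Algebra"
begin

definition centralizer :: "('a, 'b) monoid_scheme \<Rightarrow> 'a \<Rightarrow> 'a set" where
  "centralizer G x = {y \<in> carrier G. y \<otimes>\<^bsub>G\<^esub> x = x \<otimes>\<^bsub>G\<^esub> y}"

definition center :: "('a, 'b) monoid_scheme \<Rightarrow> 'a set" where
  "center G = {z \<in> carrier G. \<forall>g \<in> carrier G. z \<otimes>\<^bsub>G\<^esub> g = g \<otimes>\<^bsub>G\<^esub> z}"

definition beta :: "('a, 'b) monoid_scheme \<Rightarrow> 'a \<Rightarrow> 'a set" where
  "beta G x = {y \<in> carrier G. centralizer G y = centralizer G x}"

definition noncent_adj :: "('a, 'b) monoid_scheme \<Rightarrow> 'a \<Rightarrow> 'a \<Rightarrow> bool" where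
  "noncent_adj G x y \<longleftrightarrow> x \<noteq> y \<and> centralizer G x \<noteq> centralizer G y"

definition induced_vertices :: "('a, 'b) monoid_scheme \<Rightarrow> 'a set" where
  "induced_vertices G = carrier G - center G"

definition induced_degree :: "('a, 'b) monoid_scheme \<Rightarrow> 'a \<Rightarrow> nat" where
  "induced_degree G v = card {w \<in> induced_vertices G. noncent_adj G v w}"

definition induced_regular :: "('a, 'b) monoid_scheme \<Rightarrow> bool" where
  "induced_regular G \<longleftrightarrow>
     (\<exists>k. \<forall>v \<in> induced_vertices G. induced_degree G v = k)"

definition maximal_centralizer :: "('a, 'b) monoid_scheme \<Rightarrow> 'a \<Rightarrow> bool" where
  "maximal_centralizer G x \<longleftrightarrow> x \<in> carrier G \<and> centralizer G x \<noteq> carrier G \<and>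
     (\<forall>y \<in> carrier G. centralizer G y \<noteq> carrier G \<longrightarrow>
        centralizer G x \<subseteq> centralizer G y \<longrightarrow> centralizer G y = centralizer G x)"

definition elementary_p_group :: "('a, 'b) monoid_scheme \<Rightarrow> nat \<Rightarrow> bool" where
  "elementary_p_group H p \<longleftrightarrow> group H \<and>
     (\<forall>h \<in> carrier H. h \<noteq> \<one>\<^bsub>H\<^esub> \<longrightarrow> group.ord H h = p)"

end

theory Submission imports Defs begin

context group begin

lemma cent_sub: "x \<in> carrier G \<Longrightarrow> subgroup (centralizer G x) G"
  unfolding centralizer_def
proof (rule subgroupI)
  assume x: "x \<in> carrier G"
  show "{y \<in> carrier G. y \<otimes> x = x \<otimes> y} \<noteq> {}" using x by force
  fix a assume a: "a \<in> {y \<in> carrier G. y \<otimes> x = x \<otimes> y}"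
  then have ac: "a \<in> carrier G" and e: "a \<otimes> x = x \<otimes> a" by auto
  have "inv a \<otimes> x = inv a \<otimes> x \<otimes> (a \<otimes> inv a)" using ac x by simp
  also have "\<dots> = inv a \<otimes> (x \<otimes> a) \<otimes> inv a" using ac x by (simp add: m_assoc)
  also have "\<dots> = inv a \<otimes> (a \<otimes> x) \<otimes> inv a" by (simp add: e)
  also have "\<dots> = x \<otimes> inv a" using ac x by (simp add: m_assoc[symmetric])
  finally show "inv a \<in> {y \<in> carrier G. y \<otimes> x = x \<otimes> y}" using ac by simp
next
  assume x: "x \<in> carrier G"
  fix a b assume "a \<in> {y \<in> carrier G. y \<otimes> x = x \<otimes> y}" "b \<in> {y \<in> carrier G. y \<otimes> x = x \<otimes> y}"
  then have ac: "a \<in> carrier G" "b \<in> carrier G" and e: "a \<otimes> x = x \<otimes> a" "b \<otimes> x = x \<otimes> b" by auto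
  have "a \<otimes> b \<otimes> x = a \<otimes> (x \<otimes> b)" using ac x e by (simp add: m_assoc)
  also have "\<dots> = x \<otimes> (a \<otimes> b)" using ac x e by (simp add: m_assoc[symmetric])
  finally show "a \<otimes> b \<in> {y \<in> carrier G. y \<otimes> x = x \<otimes> y}" using ac by simp
qed auto


lemma cent_sym: "a \<in> carrier G \<Longrightarrow> g \<in> carrier G \<Longrightarrow> a \<in> centralizer G g \<longleftrightarrow> g \<in> centralizer G a"
  unfolding centralizer_def by auto

lemma center_iff: "z \<in> center G \<longleftrightarrow> z \<in> carrier G \<and> centralizer G z = carrier G"
proof
  assume "z \<in> center G" then show "z \<in> carrier G \<and> centralizer G z = carrier G"
    unfolding center_def centralizer_def by auto
next
  assume a: "z \<in> carrier G \<and> centralizer G z = carrier G"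
  have "\<forall>g\<in>carrier G. z \<otimes> g = g \<otimes> z"
  proof
    fix g assume "g \<in> carrier G"
    then have "g \<in> centralizer G z" using a by simp
    then show "z \<otimes> g = g \<otimes> z" unfolding centralizer_def by simp
  qed
  then show "z \<in> center G" using a unfolding center_def by simp
qed

lemma center_eq: "center G = carrier G \<inter> (\<Inter>g\<in>carrier G. centralizer G g)"
  unfolding center_def centralizer_def by auto

lemma center_mem: "a \<in> center G \<longleftrightarrow> a \<in> carrier G \<and> (\<forall>g\<in>carrier G. a \<in> centralizer G g)"
  unfolding center_def centralizer_def by auto

lemma center_sub: "subgroup (center G) G"
proof (rule subgroupI)
  show "center G \<subseteq> carrier G" unfolding center_def by auto
  show "center G \<noteq> {}" unfolding center_def by auto
  fix a b assume a: "a \<in> center G" and b: "b \<in> center G"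
  show "inv a \<in> center G"
    unfolding center_mem
  proof (intro conjI ballI)
    show "inv a \<in> carrier G" using a center_mem by auto
    fix g assume g: "g \<in> carrier G"
    then have "a \<in> centralizer G g" using a center_mem by auto
    then show "inv a \<in> centralizer G g" using subgroup.m_inv_closed[OF cent_sub[OF g]] by auto
  qed
  show "a \<otimes> b \<in> center G"
    unfolding center_mem
  proof (intro conjI ballI)
    show "a \<otimes> b \<in> carrier G" using a b center_mem by auto
    fix g assume g: "g \<in> carrier G"
    then have "a \<in> centralizer G g" "b \<in> centralizer G g" using a b center_mem by auto
    then show "a \<otimes> b \<in> centralizer G g" using subgroup.m_closed[OF cent_sub[OF g]] by auto
  qed
qed

lemma center_normal: "center G \<lhd> G"
proof (rule normalI[OF center_sub], intro ballI)
  fix x assume x: "x \<in> carrier G"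
  show "center G #> x = x <# center G"
    unfolding r_coset_def l_coset_def center_def using x by force
qed


lemma sub_pow: "subgroup H G \<Longrightarrow> a \<in> H \<Longrightarrow> a [^] (n::nat) \<in> H"
proof (induct n)
  case 0 then show ?case by (simp add: subgroup.one_closed)
next
  case (Suc n)
  have "a \<in> carrier G" using Suc subgroup.mem_carrier by metis
  then show ?case using Suc by (simp add: subgroup.m_closed)
qed

lemma cent_carrier: "centralizer G a \<subseteq> carrier G"
  unfolding centralizer_def by auto

lemma cm: "g \<in> carrier G \<Longrightarrow> a \<in> carrier G \<Longrightarrow> b \<in> carrier G \<Longrightarrow> g \<in> centralizer G a
   \<Longrightarrow> g \<in> centralizer G b \<Longrightarrow> g \<in> centralizer G (a \<otimes> b)"
proof -
  assume h: "g \<in> carrier G" "a \<in> carrier G" "b \<in> carrier G" "g \<in> centralizer G a" "g \<in> centralizer G b"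
  then have "a \<in> centralizer G g" "b \<in> centralizer G g" using cent_sym by auto
  then have "a \<otimes> b \<in> centralizer G g" using subgroup.m_closed[OF cent_sub[OF h(1)]] by auto
  then show ?thesis using cent_sym h by auto
qed

lemma ci: "g \<in> carrier G \<Longrightarrow> a \<in> carrier G \<Longrightarrow> g \<in> centralizer G a
   \<Longrightarrow> g \<in> centralizer G (inv a)"
proof -
  assume h: "g \<in> carrier G" "a \<in> carrier G" "g \<in> centralizer G a"
  then have "a \<in> centralizer G g" using cent_sym by auto
  then have "inv a \<in> centralizer G g" using subgroup.m_inv_closed[OF cent_sub[OF h(1)]] by auto
  then show ?thesis using cent_sym h by auto
qed

lemma cp: "g \<in> carrier G \<Longrightarrow> a \<in> carrier G \<Longrightarrow> g \<in> centralizer G a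
   \<Longrightarrow> g \<in> centralizer G (a [^] (n::nat))"
proof -
  assume h: "g \<in> carrier G" "a \<in> carrier G" "g \<in> centralizer G a"
  then have "a \<in> centralizer G g" using cent_sym by auto
  then have "a [^] n \<in> centralizer G g" using sub_pow[OF cent_sub[OF h(1)]] by auto
  then show ?thesis using cent_sym h by auto
qed

lemma cent_inv: "a \<in> carrier G \<Longrightarrow> centralizer G (inv a) = centralizer G a"
proof -
  assume a: "a \<in> carrier G"
  show ?thesis
  proof (rule subset_antisym; rule subsetI)
    fix g assume g: "g \<in> centralizer G (inv a)"
    then have gc: "g \<in> carrier G" using cent_carrier by auto
    have "g \<in> centralizer G (inv (inv a))" using ci[OF gc _ g] a by auto
    then show "g \<in> centralizer G a" using a by simp
  next
    fix g assume g: "g \<in> centralizer G a"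
    then have gc: "g \<in> carrier G" using cent_carrier by auto
    show "g \<in> centralizer G (inv a)" using ci[OF gc a g] .
  qed
qed

end
theorem proposition3p4:
  fixes G (structure) and x y :: 'a and p :: nat
  assumes "group G"
    and "finite (carrier G)"
    and "induced_regular G"
    and "x \<in> carrier G"
    and "maximal_centralizer G x"
    and "y \<in> centralizer G x - beta G x"
    and "Factorial_Ring.prime p" and "p \<noteq> 2"
    and "group.ord (G Mod center G) (center G #> y) = p"
  shows "elementary_p_group
           ((G Mod center G) \<lparr>carrier := (\<lambda>a. center G #> a) ` (beta G x \<union> center G)\<rparr>) p"
proof -
  interpret group G by fact
  interpret N: normal "center G" G by (rule center_normal)
  interpret Q: group "G Mod center G" by (rule N.factorgroup_is_group)
  let ?Z = "center G"
  let ?Cx = "centralizer G x"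
  let ?A = "beta G x \<union> center G"
  have x: "x \<in> carrier G" by fact
  have fin: "finite (carrier G)" by fact
  have p1: "p > 1" using assms(7) prime_gt_1_nat by blast
  have Zsub: "?Z \<subseteq> carrier G" unfolding center_def by auto
  have rc: "?Z #> a \<in> carrier (G Mod ?Z)" if "a \<in> carrier G" for a
    unfolding carrier_FactGroup by (rule imageI[OF that])
  have oneZ: "\<one> \<in> ?Z" unfolding center_def by auto
  have Cx_ne: "?Cx \<noteq> carrier G" using assms(5) unfolding maximal_centralizer_def by simp
  have maxC: "centralizer G w = ?Cx"
    if "w \<in> carrier G" "centralizer G w \<noteq> carrier G" "?Cx \<subseteq> centralizer G w" for w
    using assms(5) that unfolding maximal_centralizer_def by blast
  have A_char: "a \<in> ?A \<longleftrightarrow> a \<in> carrier G \<and> ?Cx \<subseteq> centralizer G a" for a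
  proof
    assume "a \<in> ?A" then show "a \<in> carrier G \<and> ?Cx \<subseteq> centralizer G a"
      unfolding beta_def using center_iff cent_carrier by auto
  next
    assume h: "a \<in> carrier G \<and> ?Cx \<subseteq> centralizer G a"
    show "a \<in> ?A"
    proof (cases "centralizer G a = carrier G")
      case True then show ?thesis using h center_iff by auto
    next
      case False then have "centralizer G a = ?Cx" using maxC h by auto
      then show ?thesis using h unfolding beta_def by auto
    qed
  qed
  have A_Cx: "a \<in> ?Cx" if "a \<in> ?A" for a
  proof -
    have "x \<in> ?Cx" using x unfolding centralizer_def by auto
    then have "x \<in> centralizer G a" using A_char that by auto
    then show ?thesis using cent_sym x A_char that by auto
  qed
  have A_sub: "subgroup ?A G"
  proof (rule subgroupI)
    show "?A \<subseteq> carrier G" using A_char by auto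
    thm oneZ
    show "?A \<noteq> {}" using oneZ by blast
    fix a b assume a: "a \<in> ?A" and b: "b \<in> ?A"
    show "inv a \<in> ?A" unfolding A_char[of "inv a"]
      using a A_char ci cent_carrier by (meson inv_closed subset_iff)
    show "a \<otimes> b \<in> ?A" unfolding A_char[of "a \<otimes> b"]
      using a b A_char cm cent_carrier by (meson m_closed subset_iff)
  qed
  have y: "y \<in> carrier G" "y \<in> ?Cx" "y \<notin> beta G x" using assms(6) cent_carrier by auto
  have y_notZ: "y \<notin> ?Z"
  proof
    assume "y \<in> ?Z"
    then have "?Z #> y = ?Z" using N.rcos_const[OF is_group] by simp
    then have "Q.ord \<one>\<^bsub>G Mod ?Z\<^esub> = p" using assms(9) by simp
    then show False using Q.ord_eq_1[OF Q.one_closed] p1 by simp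
  qed
  have y_notA: "y \<notin> ?A" using y y_notZ by auto
  have ypZ: "y [^] p \<in> ?Z"
  proof -
    have yc: "?Z #> y \<in> carrier (G Mod ?Z)" using rc[OF y(1)] .
    have "(?Z #> y) [^]\<^bsub>G Mod ?Z\<^esub> p = \<one>\<^bsub>G Mod ?Z\<^esub>"
      using Q.pow_ord_eq_1[OF yc] assms(9) by simp
    then have "?Z #> (y [^] p) = ?Z" using N.FactGroup_pow[OF y(1)] by simp
    then show ?thesis using coset_join1 center_sub y(1) by blast
  qed
  have Ckey: "centralizer G (a \<otimes> v) = ?Cx \<inter> centralizer G v"
    if a: "a \<in> ?A" "a [^] p \<notin> ?Z" and v: "v \<in> ?Cx" "v [^] p \<in> ?Z" for a v
  proof -
    have ac: "a \<in> carrier G" using a A_char by auto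
    have vc: "v \<in> carrier G" using v cent_carrier by auto
    have CxCa: "?Cx \<subseteq> centralizer G a" using a A_char by auto
    have comm: "a \<otimes> v = v \<otimes> a" using CxCa v unfolding centralizer_def by auto
    show ?thesis
    proof (rule subset_antisym; rule subsetI)
      fix g assume g: "g \<in> ?Cx \<inter> centralizer G v"
      then have gc: "g \<in> carrier G" using cent_carrier by auto
      show "g \<in> centralizer G (a \<otimes> v)" using cm[OF gc ac vc] g CxCa by auto
    next
      fix g assume g: "g \<in> centralizer G (a \<otimes> v)"
      then have gc: "g \<in> carrier G" using cent_carrier by auto
      have vpc: "v [^] p \<in> carrier G" using vc by simp
      have g1: "g \<in> centralizer G (v [^] p)" using v(2) center_iff gc by auto
      have g2: "g \<in> centralizer G ((a \<otimes> v) [^] p)" using cp[OF gc _ g] ac vc by simp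
      have eq: "(a \<otimes> v) [^] p = a [^] p \<otimes> v [^] p" using pow_mult_distrib[OF comm ac vc] .
      have eq2: "a [^] p = (a \<otimes> v) [^] p \<otimes> inv (v [^] p)"
        using eq ac vc by (simp add: m_assoc)
      have "g \<in> centralizer G ((a \<otimes> v) [^] p \<otimes> inv (v [^] p))"
        using cm[OF gc _ _ g2 ci[OF gc vpc g1]] ac vc by simp
      then have g3: "g \<in> centralizer G (a [^] p)" using eq2 by simp
      have apA: "a [^] p \<in> ?A" using sub_pow[OF A_sub a(1)] .
      have "centralizer G (a [^] p) \<noteq> carrier G" using a(2) center_iff ac by auto
      then have "centralizer G (a [^] p) = ?Cx" using maxC apA A_char by auto
      then have gx: "g \<in> ?Cx" using g3 by simp
      then have ga: "g \<in> centralizer G a" using CxCa by auto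
      have "g \<in> centralizer G (inv a \<otimes> (a \<otimes> v))"
        using cm[OF gc _ _ ci[OF gc ac ga] g] ac vc by simp
      then have "g \<in> centralizer G v" using ac vc by (simp add: m_assoc[symmetric])
      then show "g \<in> ?Cx \<inter> centralizer G v" using gx by simp
    qed
  qed
  have key: "\<forall>a\<in>?A. a [^] p \<in> ?Z"
  proof (rule ccontr)
    assume "\<not> ?thesis"
    then obtain a0 where a0: "a0 \<in> ?A" "a0 [^] p \<notin> ?Z" by blast
    have a0c: "a0 \<in> carrier G" using a0 A_char by auto
    define S where "S = {a \<in> ?A. a [^] p \<notin> ?Z}"
    define Om where "Om = {a \<in> ?A. a [^] p \<in> ?Z}"
    have finA: "finite ?A" using A_char fin by (meson finite_subset subsetI)
    have cardA: "card ?A = card S + card Om"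
    proof -
      have "?A = S \<union> Om" "S \<inter> Om = {}" unfolding S_def Om_def by auto
      then show ?thesis using finA card_Un_disjoint
        by (metis finite_Un)
    qed
    have OmS: "card Om \<le> card S"
    proof (rule card_inj_on_le)
      show "inj_on (\<lambda>a. a0 \<otimes> a) Om" unfolding Om_def inj_on_def using A_char a0c by auto
      show "finite S" using finA unfolding S_def by auto
      show "(\<lambda>a. a0 \<otimes> a) ` Om \<subseteq> S"
      proof
        fix b assume "b \<in> (\<lambda>a. a0 \<otimes> a) ` Om"
        then obtain a where a: "a \<in> ?A" "a [^] p \<in> ?Z" and b: "b = a0 \<otimes> a" unfolding Om_def by auto
        have ac: "a \<in> carrier G" using a A_char by auto
        have bA: "b \<in> ?A" using b a a0 subgroup.m_closed[OF A_sub] by auto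
        have comm: "a0 \<otimes> a = a \<otimes> a0"
          using A_Cx[OF a(1)] a0 A_char unfolding centralizer_def by auto
        have "b [^] p \<notin> ?Z"
        proof
          assume bp: "b [^] p \<in> ?Z"
          have "b [^] p = a0 [^] p \<otimes> a [^] p" using b pow_mult_distrib[OF comm a0c ac] by simp
          then have "a0 [^] p = b [^] p \<otimes> inv (a [^] p)" using a0c ac by (simp add: m_assoc)
          then have "a0 [^] p \<in> ?Z" using bp a(2) N.m_closed N.m_inv_closed by simp
          then show False using a0 by simp
        qed
        then show "b \<in> S" using bA unfolding S_def by simp
      qed
    qed
    have yi: "inv y \<in> ?Cx" using subgroup.m_inv_closed[OF cent_sub[OF x] y(2)] .
    have yip: "inv y [^] p \<in> ?Z" using ypZ y(1) nat_pow_inv N.m_inv_closed by simp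
    define T1 where "T1 = (\<lambda>a. a \<otimes> y) ` S"
    define T2 where "T2 = (\<lambda>a. a \<otimes> inv y) ` S"
    have Sc: "S \<subseteq> carrier G" unfolding S_def using A_char by auto
    have finS: "finite S" using finA unfolding S_def by auto
    have c1: "card T1 = card S" unfolding T1_def
    proof (rule card_image, rule inj_onI)
      fix a b assume "a \<in> S" "b \<in> S" "a \<otimes> (y) = b \<otimes> (y)"
      then show "a = b" using Sc y(1) right_cancel by (meson subsetD inv_closed)
    qed
    have c2: "card T2 = card S" unfolding T2_def
    proof (rule card_image, rule inj_onI)
      fix a b assume "a \<in> S" "b \<in> S" "a \<otimes> (inv y) = b \<otimes> (inv y)"
      then show "a = b" using Sc y(1) right_cancel by (meson subsetD inv_closed)
    qed
    have disj: "T1 \<inter> T2 = {}"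
    proof (rule ccontr)
      assume "T1 \<inter> T2 \<noteq> {}"
      then obtain a b where ab: "a \<in> S" "b \<in> S" "a \<otimes> y = b \<otimes> inv y"
        unfolding T1_def T2_def by auto
      have abc: "a \<in> carrier G" "b \<in> carrier G" using ab Sc by auto
      have "y \<otimes> y = inv a \<otimes> b"
      proof -
        have "a \<otimes> (y \<otimes> y) = (a \<otimes> y) \<otimes> y" using abc y(1) by (simp add: m_assoc)
        also have "\<dots> = (b \<otimes> inv y) \<otimes> y" using ab(3) by simp
        also have "\<dots> = b" using abc y(1) by (simp add: m_assoc)
        finally have e: "a \<otimes> (y \<otimes> y) = b" .
        have "inv a \<otimes> b = inv a \<otimes> (a \<otimes> (y \<otimes> y))" using e by simp
        also have "\<dots> = y \<otimes> y" using abc y(1) by (simp add: m_assoc[symmetric])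
        finally show ?thesis by simp
      qed
      then have yyA: "y \<otimes> y \<in> ?A" using ab abc subgroup.m_closed[OF A_sub] subgroup.m_inv_closed[OF A_sub]
        unfolding S_def by auto
      have "p \<ge> 2" using assms(7) prime_ge_2_nat by blast
      then have "odd p" using prime_odd_nat[OF assms(7)] assms(8) by simp
      then obtain k where k: "p = 2 * k + 1" using oddE by blast
      have "y [^] p = (y \<otimes> y) [^] k \<otimes> y"
      proof -
        have "y \<otimes> y = y [^] (2::nat)" using y(1) by (simp add: numeral_2_eq_2)
        then have "(y \<otimes> y) [^] k = y [^] (2 * k)" using y(1) nat_pow_pow by simp
        then show ?thesis using k y(1) by simp
      qed
      then have "y = inv ((y \<otimes> y) [^] k) \<otimes> y [^] p" using y(1)
        by (simp add: m_assoc[symmetric])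
      moreover have "inv ((y \<otimes> y) [^] k) \<in> ?A" using sub_pow[OF A_sub yyA] subgroup.m_inv_closed[OF A_sub] by blast
      moreover have "y [^] p \<in> ?A" using ypZ by simp
      ultimately have "y \<in> ?A" using subgroup.m_closed[OF A_sub] by metis
      then show False using y_notA by simp
    qed
    have cardT: "card (T1 \<union> T2) = 2 * card S"
      using card_Un_disjoint[of T1 T2] disj c1 c2 finS unfolding T1_def T2_def by simp
    define u where "u = a0 \<otimes> y"
    have uc: "u \<in> carrier G" using u_def a0c y(1) by simp
    have Cu: "centralizer G u = ?Cx \<inter> centralizer G y" using Ckey[OF a0 y(2) ypZ] u_def by simp
    have Tsub: "T1 \<union> T2 \<subseteq> beta G u"
    proof
      fix t assume "t \<in> T1 \<union> T2"
      then obtain a where a: "a \<in> S" and "t = a \<otimes> y \<or> t = a \<otimes> inv y" unfolding T1_def T2_def by auto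
      then consider "t = a \<otimes> y" | "t = a \<otimes> inv y" by blast
      then have "centralizer G t = ?Cx \<inter> centralizer G y \<and> t \<in> carrier G"
      proof cases
        case 1 then show ?thesis using Ckey[of a y] a y ypZ Sc unfolding S_def by auto
      next
        case 2 then show ?thesis using Ckey[of a "inv y"] a y yi yip Sc cent_inv unfolding S_def by auto
      qed
      then show "t \<in> beta G u" unfolding beta_def using Cu by simp
    qed
    let ?V = "induced_vertices G"
    have finV: "finite ?V" using fin unfolding induced_vertices_def by simp
    have beta_V: "beta G v \<subseteq> ?V" if "v \<in> ?V" for v
    proof
      fix w assume w: "w \<in> beta G v"
      have "centralizer G v \<noteq> carrier G" using that center_iff unfolding induced_vertices_def by auto
      then have "w \<notin> ?Z" using w center_iff unfolding beta_def by auto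
      then show "w \<in> ?V" using w unfolding beta_def induced_vertices_def by auto
    qed
    have deg: "induced_degree G v = card ?V - card (beta G v)" if "v \<in> ?V" for v
    proof -
      have "{w \<in> ?V. noncent_adj G v w} = ?V - beta G v"
        using that unfolding noncent_adj_def beta_def induced_vertices_def by auto
      then show ?thesis unfolding induced_degree_def
        using card_Diff_subset[OF finite_subset[OF beta_V[OF that] finV] beta_V[OF that]] by simp
    qed
    have uV: "u \<in> ?V"
    proof -
      have "centralizer G u \<noteq> carrier G" using Cu Cx_ne cent_carrier by blast
      then show ?thesis using uc center_iff unfolding induced_vertices_def by auto
    qed
    have xV: "x \<in> ?V" using x Cx_ne center_iff unfolding induced_vertices_def by auto
    obtain k where kk: "\<forall>v\<in>?V. induced_degree G v = k" using assms(3) unfolding induced_regular_def by blast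
    have "card (beta G u) = card (beta G x)"
    proof -
      have "card (beta G u) \<le> card ?V" "card (beta G x) \<le> card ?V"
        using card_mono[OF finV beta_V[OF uV]] card_mono[OF finV beta_V[OF xV]] by auto
      moreover have "card ?V - card (beta G u) = card ?V - card (beta G x)"
        using deg[OF uV] deg[OF xV] kk uV xV by simp
      ultimately show ?thesis by linarith
    qed
    moreover have "card (beta G x) + card ?Z = card ?A"
    proof -
      have "beta G x \<inter> ?Z = {}" using Cx_ne center_iff unfolding beta_def by auto
      moreover have "finite (beta G x)" "finite ?Z" using finA by auto
      ultimately show ?thesis using card_Un_disjoint by metis
    qed
    moreover have "card ?Z \<ge> 1"
    proof -
      have "finite ?Z" using finA by auto
      moreover have "?Z \<noteq> {}" using oneZ by blast
      ultimately show ?thesis by (simp add: Suc_le_eq card_gt_0_iff)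
    qed
    moreover have "card (T1 \<union> T2) \<le> card (beta G u)"
      using card_mono[OF finite_subset[OF beta_V[OF uV] finV] Tsub] .
    ultimately show False using cardT cardA OmS by linarith
  qed
  let ?K = "(\<lambda>a. ?Z #> a) ` ?A"
  have Ac: "?A \<subseteq> carrier G" using A_char by auto
  have Ksub: "subgroup ?K (G Mod ?Z)"
  proof (rule Q.subgroupI)
    show "?K \<subseteq> carrier (G Mod ?Z)" using Ac rc by blast
    show "?K \<noteq> {}" using oneZ by blast
    fix h1 h2 assume h1: "h1 \<in> ?K" and h2: "h2 \<in> ?K"
    then obtain a b where a: "a \<in> ?A" "h1 = ?Z #> a" and b: "b \<in> ?A" "h2 = ?Z #> b" by auto
    have ac: "a \<in> carrier G" "b \<in> carrier G" using a b Ac by auto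
    have "inv\<^bsub>G Mod ?Z\<^esub> h1 = ?Z #> inv a"
      using N.inv_FactGroup[OF rc[OF ac(1)]] N.rcos_inv[OF ac(1)] a by simp
    then show "inv\<^bsub>G Mod ?Z\<^esub> h1 \<in> ?K" using subgroup.m_inv_closed[OF A_sub a(1)] by auto
    have "h1 \<otimes>\<^bsub>G Mod ?Z\<^esub> h2 = ?Z #> (a \<otimes> b)" using N.rcos_sum[OF ac] a b by simp
    then show "h1 \<otimes>\<^bsub>G Mod ?Z\<^esub> h2 \<in> ?K" using subgroup.m_closed[OF A_sub a(1) b(1)] by auto
  qed
  let ?H = "(G Mod ?Z)\<lparr>carrier := ?K\<rparr>"
  have gH: "group ?H" using subgroup.subgroup_is_group[OF Ksub Q.is_group] .
  have powH: "h [^]\<^bsub>?H\<^esub> n = h [^]\<^bsub>G Mod ?Z\<^esub> n" for h and n :: nat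
    by (simp add: nat_pow_def)
  have ordH: "group.ord ?H h = Q.ord h" for h
    unfolding group.ord_def[OF gH] Q.ord_def powH by simp
  show ?thesis unfolding elementary_p_group_def
  proof (intro conjI gH ballI impI)
    fix h assume h: "h \<in> carrier ?H" and h1: "h \<noteq> \<one>\<^bsub>?H\<^esub>"
    then obtain a where a: "a \<in> ?A" "h = ?Z #> a" by auto
    have ac: "a \<in> carrier G" using a Ac by auto
    have hc: "h \<in> carrier (G Mod ?Z)" using a rc[OF ac] by simp
    have "h [^]\<^bsub>G Mod ?Z\<^esub> p = ?Z #> (a [^] p)" using N.FactGroup_pow[OF ac] a by simp
    also have "\<dots> = ?Z" using N.rcos_const[OF is_group] key a by simp
    finally have "Q.ord h dvd p" using Q.pow_eq_id[OF hc] by simp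
    moreover have "Q.ord h \<noteq> 1" using Q.ord_eq_1[OF hc] h1 by simp
    ultimately have "Q.ord h = p" using assms(7) prime_nat_iff by blast
    then show "group.ord ?H h = p" using ordH by simp
  qed
qed

end
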